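(* In the converse setting below, if $I(W_1;Y_2^nS^n\Theta_C)<\epsilon$, then \[ \sum_{i=1}^n I(X_i;W_1\mid Y_2^{i-1}S^{i-1})\ <\ \frac{\epsilon}{1-\delta_2}. \]
   Context: Converse setting. $0<\delta_1,\delta_2<1$, $\epsilon>0$. Messages $W_1$ uniform on $\mathbb{F}_q^{LN_1}$ and $W_2$ uniform on $\mathbb{F}_q^{LN_2}$, Alice's private randomness $\Theta_A$ and Calvin's private randomness $\Theta_C$ are mutually independent. Channel states $S_1,\dots,S_n\in\{B,C,BC,\emptyset\}$ are i.i.d., independent of all these, with Bob receiving with probability $1-\delta_1$ and Calvin with probability $1-\delta_2$, independently. Inputs $X_i=f_i(W_1,W_2,\Theta_A,S^{i-1})\in\mathbb{F}_q^L$ (honest acknowledgments). Outputs: $Y_{1,i}=X_i$ if Bob receives packet $i$, else $\perp$; $Y_{2,i}=X_i$ if Calvin receives packet $i$, else $\perp$. $V^i=(V_1,\dots,V_i)$ ($V^0$ empty). *)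

theory Defs
  imports "HOL-Probability.Probability"
begin

text \<open>Channel state of one packet: a pair (Bob receives, Calvin receives).
  The four states B, C, BC, empty correspond to (True,False), (False,True),
  (True,True), (False,False).\<close>
definition state_pmf :: "real \<Rightarrow> real \<Rightarrow> (bool \<times> bool) pmf" where
  "state_pmf d1 d2 = pair_pmf (bernoulli_pmf (1 - d1)) (bernoulli_pmf (1 - d2))"

text \<open>Joint distribution of (W1, W2, Theta_A, Theta_C, S), all mutually independent;
  W1 uniform on F_q^(L N1), W2 uniform on F_q^(L N2) (vectors as lists of that length),
  S_1, ..., S_n i.i.d. with law state_pmf (S is a function on indices 1..n).\<close>
definition conv_space ::
  "nat \<Rightarrow> nat \<Rightarrow> nat \<Rightarrow> real \<Rightarrow> real \<Rightarrow> 'ta pmf \<Rightarrow> 'tc pmf \<Rightarrow> nat \<Rightarrow>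
   ('f::{finite,field} list \<times> 'f list \<times> 'ta \<times> 'tc \<times> (nat \<Rightarrow> bool \<times> bool)) pmf" where
  "conv_space L N1 N2 d1 d2 PA PC n =
     pair_pmf (pmf_of_set {w. length w = L * N1})
      (pair_pmf (pmf_of_set {w. length w = L * N2})
        (pair_pmf PA (pair_pmf PC (Pi_pmf {1..n} (False, False) (\<lambda>_. state_pmf d1 d2)))))"

definition W1 :: "('f list \<times> 'f list \<times> 'ta \<times> 'tc \<times> (nat \<Rightarrow> bool \<times> bool)) \<Rightarrow> 'f list" where
  "W1 \<omega> = fst \<omega>"

definition ThC :: "('f list \<times> 'f list \<times> 'ta \<times> 'tc \<times> (nat \<Rightarrow> bool \<times> bool)) \<Rightarrow> 'tc" where
  "ThC \<omega> = fst (snd (snd (snd \<omega>)))"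

definition S_upto :: "('f list \<times> 'f list \<times> 'ta \<times> 'tc \<times> (nat \<Rightarrow> bool \<times> bool)) \<Rightarrow> nat \<Rightarrow> (bool \<times> bool) list" where
  "S_upto \<omega> k = map (snd (snd (snd (snd \<omega>)))) [1..<Suc k]"

text \<open>X_i = f_i(W1, W2, Theta_A, S^(i-1)).\<close>
definition Xin ::
  "(nat \<Rightarrow> 'f list \<Rightarrow> 'f list \<Rightarrow> 'ta \<Rightarrow> (bool \<times> bool) list \<Rightarrow> 'f list) \<Rightarrow>
   ('f list \<times> 'f list \<times> 'ta \<times> 'tc \<times> (nat \<Rightarrow> bool \<times> bool)) \<Rightarrow> nat \<Rightarrow> 'f list" where
  "Xin f \<omega> i = f i (fst \<omega>) (fst (snd \<omega>)) (fst (snd (snd \<omega>))) (S_upto \<omega> (i - 1))"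

text \<open>Calvin's output Y_{2,i}: Some X_i if Calvin receives packet i, None (= bottom) otherwise.\<close>
definition Y2 ::
  "(nat \<Rightarrow> 'f list \<Rightarrow> 'f list \<Rightarrow> 'ta \<Rightarrow> (bool \<times> bool) list \<Rightarrow> 'f list) \<Rightarrow>
   ('f list \<times> 'f list \<times> 'ta \<times> 'tc \<times> (nat \<Rightarrow> bool \<times> bool)) \<Rightarrow> nat \<Rightarrow> 'f list option" where
  "Y2 f \<omega> i = (if snd (snd (snd (snd (snd \<omega>))) i) then Some (Xin f \<omega> i) else None)"

definition Y2_upto ::
  "(nat \<Rightarrow> 'f list \<Rightarrow> 'f list \<Rightarrow> 'ta \<Rightarrow> (bool \<times> bool) list \<Rightarrow> 'f list) \<Rightarrow>
   ('f list \<times> 'f list \<times> 'ta \<times> 'tc \<times> (nat \<Rightarrow> bool \<times> bool)) \<Rightarrow> nat \<Rightarrow> 'f list option list" where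
  "Y2_upto f \<omega> k = map (Y2 f \<omega>) [1..<Suc k]"

end

theory Submission
  imports Defs
begin

lemma MI_pmf:
  fixes p :: "'o pmf" and X :: "'o \<Rightarrow> 'x::countable" and Y :: "'o \<Rightarrow> 'y::countable"
  assumes b: "1 < b"
  shows "prob_space.mutual_information (measure_pmf p) b (count_space UNIV) (count_space UNIV) X Y
    = measure_pmf.expectation p (\<lambda>\<omega>. log b (pmf (map_pmf (\<lambda>\<omega>. (X \<omega>, Y \<omega>)) p) (X \<omega>, Y \<omega>) /
         (pmf (map_pmf X p) (X \<omega>) * pmf (map_pmf Y p) (Y \<omega>))))"
proof -
  interpret information_space "measure_pmf p" b by standard (rule b)
  let ?Pxy = "\<lambda>z. pmf (map_pmf (\<lambda>\<omega>. (X \<omega>, Y \<omega>)) p) z"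
  let ?Px = "pmf (map_pmf X p)" let ?Py = "pmf (map_pmf Y p)"
  have cs: "count_space UNIV \<Otimes>\<^sub>M count_space UNIV = (count_space UNIV :: ('x\<times>'y) measure)"
    by (simp add: pair_measure_countable)
  have D: "distributed (measure_pmf p) (count_space UNIV) Z (pmf (map_pmf Z p))" for Z :: "'o \<Rightarrow> 'z::countable"
  proof -
    have "distr (measure_pmf p) (count_space UNIV) Z = density (count_space UNIV) (pmf (map_pmf Z p))"
      by (metis map_pmf_rep_eq measure_pmf_eq_density)
    then show ?thesis unfolding distributed_def by auto
  qed
  have "prob_space.mutual_information (measure_pmf p) b (count_space UNIV) (count_space UNIV) X Y
     = integral\<^sup>L (count_space UNIV \<Otimes>\<^sub>M count_space UNIV) (\<lambda>z. ?Pxy z * log b (?Pxy z / (?Px (fst z) * ?Py (snd z))))"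
    apply (rule mutual_information_distr)
    apply (auto intro!: sigma_finite_measure_count_space_countable simp: cs D)
    done
  also have "\<dots> = integral\<^sup>L (count_space UNIV) (\<lambda>z. ?Pxy z *\<^sub>R log b (?Pxy z / (?Px (fst z) * ?Py (snd z))))"
    by (simp add: cs)
  also have "\<dots> = integral\<^sup>L (measure_pmf (map_pmf (\<lambda>\<omega>. (X \<omega>, Y \<omega>)) p)) (\<lambda>z. log b (?Pxy z / (?Px (fst z) * ?Py (snd z))))"
    by (subst measure_pmf_eq_density[of "map_pmf (\<lambda>\<omega>. (X \<omega>, Y \<omega>)) p"], subst integral_density) auto
  also have "\<dots> = measure_pmf.expectation p (\<lambda>\<omega>. log b (?Pxy (X \<omega>, Y \<omega>) / (?Px (X \<omega>) * ?Py (Y \<omega>))))"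
    by simp
  finally show ?thesis .
qed

definition Nent :: "real \<Rightarrow> 'z pmf \<Rightarrow> real" where
  "Nent b r = measure_pmf.expectation r (\<lambda>v. log b (pmf r v))"

lemma Nent_inj: "inj g \<Longrightarrow> Nent b (map_pmf g r) = Nent b r"
  unfolding Nent_def by (simp add: pmf_map_inj')

lemma pmf_map_pos: "\<omega> \<in> set_pmf q \<Longrightarrow> 0 < pmf (map_pmf Z q) (Z \<omega>)"
  by (simp add: pmf_positive)

lemma integrable_lp:
  assumes "finite (Z ` set_pmf q)"
  shows "integrable q (\<lambda>\<omega>. log b (pmf (map_pmf Z q) (Z \<omega>)))"
proof -
  have "integrable (map_pmf Z q) (\<lambda>z. log b (pmf (map_pmf Z q) z))"
    by (rule integrable_measure_pmf_finite) (use assms in simp)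
  then show ?thesis by simp
qed

lemma MI_N:
  fixes q :: "'o pmf" and U :: "'o \<Rightarrow> 'x::countable" and V :: "'o \<Rightarrow> 'y::countable"
  assumes b: "1 < b" and fU: "finite (U ` set_pmf q)" and fV: "finite (V ` set_pmf q)"
  shows "prob_space.mutual_information (measure_pmf q) b (count_space UNIV) (count_space UNIV) U V
    = Nent b (map_pmf (\<lambda>\<omega>. (U \<omega>, V \<omega>)) q) - Nent b (map_pmf U q) - Nent b (map_pmf V q)"
proof -
  let ?UV = "\<lambda>\<omega>. (U \<omega>, V \<omega>)"
  have fUV: "finite (?UV ` set_pmf q)"
    by (rule finite_subset[OF _ finite_cartesian_product[OF fU fV]]) auto
  have "prob_space.mutual_information (measure_pmf q) b (count_space UNIV) (count_space UNIV) U V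
    = measure_pmf.expectation q (\<lambda>\<omega>. log b (pmf (map_pmf ?UV q) (?UV \<omega>)) - log b (pmf (map_pmf U q) (U \<omega>))
        - log b (pmf (map_pmf V q) (V \<omega>)))"
    unfolding MI_pmf[OF b]
    apply (rule integral_cong_AE)
      apply simp apply simp
    apply (rule AE_pmfI)
    subgoal for \<omega>
    using pmf_map_pos[of \<omega> q ?UV] pmf_map_pos[of \<omega> q U] pmf_map_pos[of \<omega> q V]
    by (simp add: log_divide log_mult) done
  also have "\<dots> = measure_pmf.expectation q (\<lambda>\<omega>. log b (pmf (map_pmf ?UV q) (?UV \<omega>)))
     - measure_pmf.expectation q (\<lambda>\<omega>. log b (pmf (map_pmf U q) (U \<omega>)))
     - measure_pmf.expectation q (\<lambda>\<omega>. log b (pmf (map_pmf V q) (V \<omega>)))"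
    using integrable_lp[OF fUV] integrable_lp[OF fU] integrable_lp[OF fV]
    by (simp add: Bochner_Integration.integral_diff)
  also have "\<dots> = Nent b (map_pmf ?UV q) - Nent b (map_pmf U q) - Nent b (map_pmf V q)"
    unfolding Nent_def by simp
  finally show ?thesis .
qed

lemma MI_transfer:
  fixes p :: "'o pmf" and U :: "'a \<Rightarrow> 'x::countable" and V :: "'a \<Rightarrow> 'y::countable"
  assumes b: "1 < b"
  shows "prob_space.mutual_information (measure_pmf p) b (count_space UNIV) (count_space UNIV) (\<lambda>\<omega>. U (\<pi> \<omega>)) (\<lambda>\<omega>. V (\<pi> \<omega>))
   = prob_space.mutual_information (measure_pmf (map_pmf \<pi> p)) b (count_space UNIV) (count_space UNIV) U V"
  unfolding MI_pmf[OF b] by (simp add: map_pmf_comp)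

lemma measure_pair_rect:
  "measure (pair_pmf A B) (X \<times> Y) = measure A X * measure B Y"
proof -
  have "measure (pair_pmf A B) (X \<times> Y) = pmf (map_pmf (\<lambda>(a,b). (a \<in> X, b \<in> Y)) (pair_pmf A B)) (True, True)"
  proof -
    have "(\<lambda>(a,b). (a \<in> X, b \<in> Y)) -` {(True,True)} = X \<times> Y" by auto
    then show ?thesis by (simp add: pmf_map)
  qed
  also have "\<dots> = pmf (pair_pmf (map_pmf (\<lambda>a. a \<in> X) A) (map_pmf (\<lambda>b. b \<in> Y) B)) (True, True)"
    by (simp add: map_pair)
  also have "\<dots> = measure A X * measure B Y"
    by (simp add: pmf_pair pmf_map vimage_def)
  finally show ?thesis .
qed

lemma expectation_pair_prod:
  fixes f :: "'a \<Rightarrow> real" and g :: "'b \<Rightarrow> real"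
  assumes "finite (set_pmf A)" "finite (set_pmf B)"
  shows "measure_pmf.expectation (pair_pmf A B) (\<lambda>x. f (fst x) * g (snd x))
     = measure_pmf.expectation A f * measure_pmf.expectation B g"
proof -
  have "measure_pmf.expectation (pair_pmf A B) (\<lambda>x. f (fst x) * g (snd x))
      = (\<Sum>x\<in>set_pmf A \<times> set_pmf B. pmf (pair_pmf A B) x * (f (fst x) * g (snd x)))"
    by (subst integral_measure_pmf_real[where A="set_pmf A \<times> set_pmf B"]) (auto simp: assms mult.commute)
  also have "\<dots> = (\<Sum>a\<in>set_pmf A. \<Sum>b\<in>set_pmf B. (pmf A a * f a) * (pmf B b * g b))"
    by (simp add: sum.cartesian_product case_prod_unfold pmf_pair[symmetric] algebra_simps)
  also have "\<dots> = (\<Sum>a\<in>set_pmf A. pmf A a * f a) * (\<Sum>b\<in>set_pmf B. pmf B b * g b)"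
    by (simp add: sum_product)
  also have "\<dots> = measure_pmf.expectation A f * measure_pmf.expectation B g"
    by (subst (1 2) integral_measure_pmf_real[where A="set_pmf _"]) (auto simp: assms mult.commute)
  finally show ?thesis .
qed

lemma core:
  fixes \<rho> :: "('z \<times> 'x) pmf" and \<sigma> :: "'s::finite pmf" and c :: "'s \<Rightarrow> bool"
  assumes fin: "finite (set_pmf \<rho>)"
  defines "G \<equiv> (\<lambda>((z,x),s). (z, if c s then Some x else None, s))"
  shows "Nent b (map_pmf G (pair_pmf \<rho> \<sigma>)) = Nent b \<sigma> + measure \<sigma> {s. c s} * Nent b \<rho>
           + (1 - measure \<sigma> {s. c s}) * Nent b (map_pmf fst \<rho>)"
proof -
  let ?q = "pair_pmf \<rho> \<sigma>"
  let ?I = "\<lambda>s. indicator {s. c s} s :: real"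
  have finq: "finite (set_pmf ?q)" using fin by simp
  have finr1: "finite (set_pmf (map_pmf fst \<rho>))" using fin by simp
  have pG: "pmf (map_pmf G ?q) (G w) = pmf \<sigma> (snd w) * (if c (snd w) then pmf \<rho> (fst w) else pmf (map_pmf fst \<rho>) (fst (fst w)))" for w
  proof -
    obtain z x s where w: "w = ((z,x),s)" by (metis prod.collapse)
    show ?thesis
    proof (cases "c s")
      case True
      then have "G -` {G w} = {(z,x)} \<times> {s}" by (auto simp: G_def w split: if_splits)
      then show ?thesis using True
        by (simp add: pmf_map measure_pair_rect measure_pmf_single w pmf_pair mult.commute)
    next
      case False
      then have "G -` {G w} = fst -` {z} \<times> {s}" by (auto simp: G_def w split: if_splits)
      then show ?thesis using False
        by (simp add: pmf_map measure_pair_rect measure_pmf_single w pmf_pair mult.commute)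
    qed
  qed
  have "Nent b (map_pmf G ?q) = measure_pmf.expectation ?q (\<lambda>w. log b (pmf (map_pmf G ?q) (G w)))"
    unfolding Nent_def by simp
  also have "\<dots> = measure_pmf.expectation ?q (\<lambda>w. log b (pmf \<sigma> (snd w))
      + ?I (snd w) * log b (pmf \<rho> (fst w)) + (1 - ?I (snd w)) * log b (pmf (map_pmf fst \<rho>) (fst (fst w))))"
  proof (rule integral_cong_AE)
    show "AE w in ?q. log b (pmf (map_pmf G ?q) (G w)) = log b (pmf \<sigma> (snd w))
      + ?I (snd w) * log b (pmf \<rho> (fst w)) + (1 - ?I (snd w)) * log b (pmf (map_pmf fst \<rho>) (fst (fst w)))"
    proof (rule AE_pmfI)
      fix w assume w: "w \<in> set_pmf ?q"
      then have p1: "pmf \<sigma> (snd w) > 0" and p2: "pmf \<rho> (fst w) > 0"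
        by (auto simp: pmf_positive)
      have p3: "pmf (map_pmf fst \<rho>) (fst (fst w)) > 0"
        using pmf_map_pos[of "fst w" \<rho> fst] p2 by (simp add: pmf_positive_iff)
      show "log b (pmf (map_pmf G ?q) (G w)) = log b (pmf \<sigma> (snd w))
      + ?I (snd w) * log b (pmf \<rho> (fst w)) + (1 - ?I (snd w)) * log b (pmf (map_pmf fst \<rho>) (fst (fst w)))"
        unfolding pG using p1 p2 p3 by (simp add: log_mult indicator_def)
    qed
  qed simp_all
  also have "\<dots> = measure_pmf.expectation ?q (\<lambda>w. log b (pmf \<sigma> (snd w)))
      + measure_pmf.expectation ?q (\<lambda>w. log b (pmf \<rho> (fst w)) * ?I (snd w))
      + measure_pmf.expectation ?q (\<lambda>w. log b (pmf (map_pmf fst \<rho>) (fst (fst w))) * (1 - ?I (snd w)))"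
    using finq by (simp add: Bochner_Integration.integral_add integrable_measure_pmf_finite mult.commute)
  also have "\<dots> = Nent b \<sigma> + Nent b \<rho> * measure_pmf.expectation \<sigma> ?I
      + Nent b (map_pmf fst \<rho>) * measure_pmf.expectation \<sigma> (\<lambda>s. 1 - ?I s)"
    apply (subst expectation_pair_prod[OF fin], simp)
    apply (subst expectation_pair_prod[OF fin, where f="\<lambda>u. log b (pmf (map_pmf fst \<rho>) (fst u))"], simp)
    apply (simp add: Nent_def expectation_pair_pmf_snd[where f="\<lambda>v. log b (pmf \<sigma> v)"])
    done
  also have "measure_pmf.expectation \<sigma> ?I = measure \<sigma> {s. c s}" by simp
  also have "measure_pmf.expectation \<sigma> (\<lambda>s. 1 - ?I s) = 1 - measure \<sigma> {s. c s}"
    by (subst Bochner_Integration.integral_diff) (auto simp: integrable_measure_pmf_finite)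
  finally show ?thesis by (simp add: algebra_simps)
qed

lemma map_fst_pair_fun: "map_pmf (\<lambda>w. F (fst w)) (pair_pmf \<mu> \<sigma>) = map_pmf F \<mu>"
  by (metis map_fst_pair_pmf map_pmf_comp)

lemma step:
  fixes \<mu> :: "'a pmf" and \<sigma> :: "'s::{finite,countable} pmf" and c :: "'s \<Rightarrow> bool"
    and W :: "'a \<Rightarrow> 'w::countable" and YP :: "'a \<Rightarrow> 'x::countable option list"
    and LP :: "'a \<Rightarrow> 's list" and X :: "'a \<Rightarrow> 'x"
  assumes b: "1 < b" and fW: "finite (W ` set_pmf \<mu>)" and fY: "finite (YP ` set_pmf \<mu>)"
    and fL: "finite (LP ` set_pmf \<mu>)" and fX: "finite (X ` set_pmf \<mu>)"
  shows "prob_space.mutual_information (measure_pmf (pair_pmf \<mu> \<sigma>)) b (count_space UNIV) (count_space UNIV)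
           (\<lambda>w. W (fst w)) (\<lambda>w. (YP (fst w) @ [if c (snd w) then Some (X (fst w)) else None], LP (fst w) @ [snd w]))
       - prob_space.mutual_information (measure_pmf (pair_pmf \<mu> \<sigma>)) b (count_space UNIV) (count_space UNIV)
           (\<lambda>w. W (fst w)) (\<lambda>w. (YP (fst w), LP (fst w)))
     = measure \<sigma> {s. c s} *
       (prob_space.mutual_information (measure_pmf (pair_pmf \<mu> \<sigma>)) b (count_space UNIV) (count_space UNIV)
           (\<lambda>w. X (fst w)) (\<lambda>w. (W (fst w), (YP (fst w), LP (fst w))))
       - prob_space.mutual_information (measure_pmf (pair_pmf \<mu> \<sigma>)) b (count_space UNIV) (count_space UNIV)
           (\<lambda>w. X (fst w)) (\<lambda>w. (YP (fst w), LP (fst w))))"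
proof -
  let ?q = "pair_pmf \<mu> \<sigma>"
  let ?m = "measure \<sigma> {s. c s}"
  define P where "P = (\<lambda>a. (YP a, LP a))"
  define G :: "(('w \<times> 'x option list \<times> 's list) \<times> 'x) \<times> 's \<Rightarrow> _" where
    "G = (\<lambda>((z,x),s). (z, if c s then Some x else None, s))"
  define G2 :: "(('x option list \<times> 's list) \<times> 'x) \<times> 's \<Rightarrow> _" where
    "G2 = (\<lambda>((z,x),s). (z, if c s then Some x else None, s))"
  define \<rho>1 where "\<rho>1 = map_pmf (\<lambda>a. ((W a, P a), X a)) \<mu>"
  define \<rho>2 where "\<rho>2 = map_pmf (\<lambda>a. (P a, X a)) \<mu>"
  define g1 :: "('w \<times> 'x option list \<times> 's list) \<times> 'x option \<times> 's \<Rightarrow> _" where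
    "g1 = (\<lambda>(z,y,s). (fst z, (fst (snd z) @ [y], snd (snd z) @ [s])))"
  define g2 :: "('x option list \<times> 's list) \<times> 'x option \<times> 's \<Rightarrow> _" where
    "g2 = (\<lambda>(z,y,s). (fst z @ [y], snd z @ [s]))"
  have ig1: "inj g1" by (auto simp: inj_def g1_def)
  have ig2: "inj g2" by (auto simp: inj_def g2_def)
  have fP: "finite (P ` set_pmf \<mu>)"
    by (rule finite_subset[OF _ finite_cartesian_product[OF fY fL]]) (auto simp: P_def)
  have fWP: "finite ((\<lambda>a. (W a, P a)) ` set_pmf \<mu>)"
    by (rule finite_subset[OF _ finite_cartesian_product[OF fW fP]]) auto
  have setq: "set_pmf ?q = set_pmf \<mu> \<times> set_pmf \<sigma>" by simp
  have fin1: "finite (set_pmf \<rho>1)" unfolding \<rho>1_def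
    by (simp, rule finite_subset[OF _ finite_cartesian_product[OF finite_cartesian_product[OF fW fP] fX]]) auto
  have fin2: "finite (set_pmf \<rho>2)" unfolding \<rho>2_def
    by (simp, rule finite_subset[OF _ finite_cartesian_product[OF fP fX]]) auto
  have fr: "finite ((\<lambda>w. F (fst w)) ` set_pmf ?q)" if "finite (F ` set_pmf \<mu>)" for F :: "'a \<Rightarrow> 'z"
    by (rule finite_subset[OF _ that]) auto
  have fYi: "finite ((\<lambda>w. (YP (fst w) @ [if c (snd w) then Some (X (fst w)) else None], LP (fst w) @ [snd w])) ` set_pmf ?q)"
  proof -
    have "((\<lambda>w. (YP (fst w) @ [if c (snd w) then Some (X (fst w)) else None], LP (fst w) @ [snd w])) ` set_pmf ?q)
      \<subseteq> (\<lambda>((yp,l),y,s). (yp @ [y], l @ [s])) ` ((P ` set_pmf \<mu>) \<times> (insert None (Some ` X ` set_pmf \<mu>)) \<times> UNIV)"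
    proof
      fix v assume "v \<in> (\<lambda>w. (YP (fst w) @ [if c (snd w) then Some (X (fst w)) else None], LP (fst w) @ [snd w])) ` set_pmf ?q"
      then obtain a s where as: "a \<in> set_pmf \<mu>" and v: "v = (YP a @ [if c s then Some (X a) else None], LP a @ [s])"
        by auto
      show "v \<in> (\<lambda>((yp,l),y,s). (yp @ [y], l @ [s])) ` ((P ` set_pmf \<mu>) \<times> (insert None (Some ` X ` set_pmf \<mu>)) \<times> UNIV)"
        by (rule image_eqI[of _ _ "(P a, (if c s then Some (X a) else None), s)"]) (use as in \<open>auto simp: P_def v\<close>)
    qed
    moreover have "finite ((P ` set_pmf \<mu>) \<times> (insert None (Some ` X ` set_pmf \<mu>)) \<times> (UNIV :: 's set))"
      using fP fX by auto
    ultimately show ?thesis by (meson finite_imageI finite_subset)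
  qed
  have eqWP': "map_pmf (\<lambda>w. (W (fst w), (YP (fst w) @ [if c (snd w) then Some (X (fst w)) else None], LP (fst w) @ [snd w]))) ?q
     = map_pmf g1 (map_pmf G (pair_pmf \<rho>1 \<sigma>))"
    unfolding \<rho>1_def pair_map_pmf1 map_pmf_comp
    by (intro map_pmf_cong refl) (auto simp: g1_def G_def P_def)
  have eqP': "map_pmf (\<lambda>w. (YP (fst w) @ [if c (snd w) then Some (X (fst w)) else None], LP (fst w) @ [snd w])) ?q
     = map_pmf g2 (map_pmf G2 (pair_pmf \<rho>2 \<sigma>))"
    unfolding \<rho>2_def pair_map_pmf1 map_pmf_comp
    by (intro map_pmf_cong refl) (auto simp: g2_def G2_def P_def)
  have eqXWP: "map_pmf (\<lambda>w. (X (fst w), (W (fst w), (YP (fst w), LP (fst w))))) ?q = map_pmf prod.swap \<rho>1"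
    using map_fst_pair_fun[where F="\<lambda>a. (X a, (W a, (YP a, LP a)))" and \<mu>=\<mu> and \<sigma>=\<sigma>]
    by (simp add: P_def \<rho>1_def map_pmf_comp)
  have eqXP: "map_pmf (\<lambda>w. (X (fst w), (YP (fst w), LP (fst w)))) ?q = map_pmf prod.swap \<rho>2"
    using map_fst_pair_fun[where F="\<lambda>a. (X a, (YP a, LP a))" and \<mu>=\<mu> and \<sigma>=\<sigma>]
    by (simp add: P_def \<rho>2_def map_pmf_comp)
  have m1: "map_pmf fst \<rho>1 = map_pmf (\<lambda>a. (W a, P a)) \<mu>" by (simp add: \<rho>1_def map_pmf_comp)
  have m2: "map_pmf fst \<rho>2 = map_pmf P \<mu>" by (simp add: \<rho>2_def map_pmf_comp)
  have c1: "Nent b (map_pmf G (pair_pmf \<rho>1 \<sigma>)) = Nent b \<sigma> + ?m * Nent b \<rho>1 + (1 - ?m) * Nent b (map_pmf (\<lambda>a. (W a, P a)) \<mu>)"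
    unfolding G_def m1[symmetric] by (rule core[OF fin1])
  have c2: "Nent b (map_pmf G2 (pair_pmf \<rho>2 \<sigma>)) = Nent b \<sigma> + ?m * Nent b \<rho>2 + (1 - ?m) * Nent b (map_pmf P \<mu>)"
    unfolding G2_def m2[symmetric] by (rule core[OF fin2])
  have swap: "inj prod.swap" by simp
  let ?MI = "\<lambda>U V. prob_space.mutual_information (measure_pmf ?q) b (count_space UNIV) (count_space UNIV) U V"
  let ?P' = "\<lambda>w. (YP (fst w) @ [if c (snd w) then Some (X (fst w)) else None], LP (fst w) @ [snd w])"
  have e1: "?MI (\<lambda>w. W (fst w)) ?P' = Nent b (map_pmf g1 (map_pmf G (pair_pmf \<rho>1 \<sigma>))) - Nent b (map_pmf W \<mu>)
       - Nent b (map_pmf g2 (map_pmf G2 (pair_pmf \<rho>2 \<sigma>)))"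
    by (simp only: MI_N[OF b fr[OF fW] fYi] eqWP' eqP' map_fst_pair_fun)
  have e2: "?MI (\<lambda>w. W (fst w)) (\<lambda>w. (YP (fst w), LP (fst w))) = Nent b (map_pmf (\<lambda>a. (W a, P a)) \<mu>)
       - Nent b (map_pmf W \<mu>) - Nent b (map_pmf P \<mu>)"
    unfolding P_def by (simp only: MI_N[OF b fr[OF fW] fr[OF fP, unfolded P_def]] map_fst_pair_fun map_fst_pair_fun[of "\<lambda>a. (W a, YP a, LP a)"] map_fst_pair_fun[of "\<lambda>a. (YP a, LP a)"])
  have e3: "?MI (\<lambda>w. X (fst w)) (\<lambda>w. (W (fst w), (YP (fst w), LP (fst w)))) = Nent b (map_pmf prod.swap \<rho>1)
       - Nent b (map_pmf X \<mu>) - Nent b (map_pmf (\<lambda>a. (W a, P a)) \<mu>)"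
    unfolding P_def by (simp only: MI_N[OF b fr[OF fX] fr[OF fWP, unfolded P_def]] eqXWP[unfolded P_def] map_fst_pair_fun map_fst_pair_fun[of "\<lambda>a. (W a, YP a, LP a)"])
  have e4: "?MI (\<lambda>w. X (fst w)) (\<lambda>w. (YP (fst w), LP (fst w))) = Nent b (map_pmf prod.swap \<rho>2)
       - Nent b (map_pmf X \<mu>) - Nent b (map_pmf P \<mu>)"
    unfolding P_def by (simp only: MI_N[OF b fr[OF fX] fr[OF fP, unfolded P_def]] eqXP map_fst_pair_fun map_fst_pair_fun[of "\<lambda>a. (YP a, LP a)"])
  show ?thesis
    unfolding e1 e2 e3 e4 Nent_inj[OF ig1] Nent_inj[OF ig2] Nent_inj[OF swap] c1 c2
    by (simp add: algebra_simps)
qed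

lemma indep_theta:
  "map_pmf (\<lambda>\<omega>. (F (fst \<omega>) (fst (snd \<omega>)) (fst (snd (snd \<omega>))) (snd (snd (snd (snd \<omega>)))), fst (snd (snd (snd \<omega>)))))
     (pair_pmf A (pair_pmf B (pair_pmf C (pair_pmf D E))))
   = pair_pmf (map_pmf (\<lambda>\<omega>. F (fst \<omega>) (fst (snd \<omega>)) (fst (snd (snd \<omega>))) (snd (snd (snd (snd \<omega>)))))
     (pair_pmf A (pair_pmf B (pair_pmf C (pair_pmf D E))))) D"
  unfolding pair_pmf_def map_pmf_def
  apply (simp add: bind_assoc_pmf bind_return_pmf)
  apply (intro bind_pmf_cong[OF refl])
  apply (rule bind_commute_pmf)
  done

lemma indep_state:
  fixes \<sigma> :: "'s pmf"
  assumes i: "i \<in> {1..n}"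
  shows "map_pmf (\<lambda>\<omega>. ((fst \<omega>, fst (snd \<omega>), fst (snd (snd \<omega>)), map (snd (snd (snd (snd \<omega>)))) [1..<i]), snd (snd (snd (snd \<omega>))) i))
     (pair_pmf A (pair_pmf B (pair_pmf C (pair_pmf D (Pi_pmf {1..n} dflt (\<lambda>_. \<sigma>))))))
   = pair_pmf (map_pmf (\<lambda>\<omega>. (fst \<omega>, fst (snd \<omega>), fst (snd (snd \<omega>)), map (snd (snd (snd (snd \<omega>)))) [1..<i]))
     (pair_pmf A (pair_pmf B (pair_pmf C (pair_pmf D (Pi_pmf {1..n} dflt (\<lambda>_. \<sigma>))))))) \<sigma>"
proof -
  have ins: "{1..n} = insert i ({1..n} - {i})" using i by auto
  have Pi: "Pi_pmf {1..n} dflt (\<lambda>_. \<sigma>) = do {y \<leftarrow> \<sigma>; f \<leftarrow> Pi_pmf ({1..n} - {i}) dflt (\<lambda>_. \<sigma>); return_pmf (f(i := y))}"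
    by (subst ins, subst Pi_pmf_insert') auto
  show ?thesis
    unfolding Pi pair_pmf_def map_pmf_def
    apply (simp add: bind_assoc_pmf bind_return_pmf)
    apply (intro bind_pmf_cong[OF refl])
    apply (rule bind_commute_pmf)
    done
qed

lemma MI_indep_extra:
  fixes p :: "'o pmf" and U :: "'o \<Rightarrow> 'u::countable" and V :: "'o \<Rightarrow> 'v::countable" and T :: "'o \<Rightarrow> 't::countable"
  assumes b: "1 < b"
    and ind: "map_pmf (\<lambda>\<omega>. ((U \<omega>, V \<omega>), T \<omega>)) p = pair_pmf (map_pmf (\<lambda>\<omega>. (U \<omega>, V \<omega>)) p) \<tau>"
  shows "prob_space.mutual_information (measure_pmf p) b (count_space UNIV) (count_space UNIV) U (\<lambda>\<omega>. (V \<omega>, T \<omega>))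
       = prob_space.mutual_information (measure_pmf p) b (count_space UNIV) (count_space UNIV) U V"
proof -
  let ?R = "map_pmf (\<lambda>\<omega>. (U \<omega>, V \<omega>)) p"
  define h :: "('u \<times> 'v) \<times> 't \<Rightarrow> _" where "h = (\<lambda>((u,v),t). (u,(v,t)))"
  have ih: "inj h" by (auto simp: inj_def h_def)
  have l1: "map_pmf (\<lambda>\<omega>. (U \<omega>, (V \<omega>, T \<omega>))) p = map_pmf h (pair_pmf ?R \<tau>)"
    unfolding ind[symmetric] map_pmf_comp by (simp add: h_def)
  have l2: "map_pmf (\<lambda>\<omega>. (V \<omega>, T \<omega>)) p = pair_pmf (map_pmf V p) \<tau>"
  proof -
    have "map_pmf (\<lambda>\<omega>. (V \<omega>, T \<omega>)) p = map_pmf (\<lambda>(a, b). (snd a, id b)) (pair_pmf ?R \<tau>)"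
      unfolding ind[symmetric] map_pmf_comp by simp
    also have "\<dots> = pair_pmf (map_pmf snd ?R) (map_pmf id \<tau>)" by (rule map_pair)
    finally show ?thesis by (simp add: map_pmf_comp)
  qed
  show ?thesis
    unfolding MI_pmf[OF b]
  proof (rule integral_cong_AE)
    show "AE \<omega> in p. log b (pmf (map_pmf (\<lambda>\<omega>. (U \<omega>, V \<omega>, T \<omega>)) p) (U \<omega>, V \<omega>, T \<omega>) /
          (pmf (map_pmf U p) (U \<omega>) * pmf (map_pmf (\<lambda>\<omega>. (V \<omega>, T \<omega>)) p) (V \<omega>, T \<omega>))) =
         log b (pmf (map_pmf (\<lambda>\<omega>. (U \<omega>, V \<omega>)) p) (U \<omega>, V \<omega>) /
          (pmf (map_pmf U p) (U \<omega>) * pmf (map_pmf V p) (V \<omega>)))"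
    proof (rule AE_pmfI)
      fix \<omega> assume w: "\<omega> \<in> set_pmf p"
      have "((U \<omega>, V \<omega>), T \<omega>) \<in> set_pmf (map_pmf (\<lambda>\<omega>. ((U \<omega>, V \<omega>), T \<omega>)) p)"
        using w by auto
      then have "T \<omega> \<in> set_pmf \<tau>" unfolding ind by simp
      then have t: "pmf \<tau> (T \<omega>) > 0" by (simp add: pmf_positive)
      have e1: "pmf (map_pmf (\<lambda>\<omega>. (U \<omega>, V \<omega>, T \<omega>)) p) (U \<omega>, V \<omega>, T \<omega>) = pmf ?R (U \<omega>, V \<omega>) * pmf \<tau> (T \<omega>)"
      proof -
        have "(U \<omega>, V \<omega>, T \<omega>) = h ((U \<omega>, V \<omega>), T \<omega>)" by (simp add: h_def)
        then show ?thesis unfolding l1 by (simp only: pmf_map_inj'[OF ih] pmf_pair)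
      qed
      show "log b (pmf (map_pmf (\<lambda>\<omega>. (U \<omega>, V \<omega>, T \<omega>)) p) (U \<omega>, V \<omega>, T \<omega>) /
          (pmf (map_pmf U p) (U \<omega>) * pmf (map_pmf (\<lambda>\<omega>. (V \<omega>, T \<omega>)) p) (V \<omega>, T \<omega>))) =
         log b (pmf (map_pmf (\<lambda>\<omega>. (U \<omega>, V \<omega>)) p) (U \<omega>, V \<omega>) /
          (pmf (map_pmf U p) (U \<omega>) * pmf (map_pmf V p) (V \<omega>)))"
        unfolding e1 l2 pmf_pair using t by simp
    qed
  qed simp_all
qed

lemma MI_const:
  fixes p :: "'o pmf" and U :: "'o \<Rightarrow> 'u::countable" and c :: "'v::countable"
  assumes b: "1 < b"
  shows "prob_space.mutual_information (measure_pmf p) b (count_space UNIV) (count_space UNIV) U (\<lambda>\<omega>. c) = 0"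
proof -
  have l: "map_pmf (\<lambda>\<omega>. (U \<omega>, c)) p = map_pmf (\<lambda>u. (u, c)) (map_pmf U p)" by (simp add: map_pmf_comp)
  have i: "inj (\<lambda>u. (u, c))" by (auto simp: inj_def)
  show ?thesis unfolding MI_pmf[OF b]
    apply (subst integral_cong_AE[where g="\<lambda>_. 0"])
    apply simp apply simp
    apply (rule AE_pmfI)
    subgoal for \<omega> using pmf_map_pos[of \<omega> p U]
      by (simp only: l pmf_map_inj'[OF i]) simp
    apply simp
    done
qed

lemma MI_inj2:
  fixes p :: "'o pmf" and U :: "'o \<Rightarrow> 'u::countable" and V :: "'o \<Rightarrow> 'v::countable" and g :: "'v \<Rightarrow> 'w::countable"
  assumes b: "1 < b" and g: "inj g"
  shows "prob_space.mutual_information (measure_pmf p) b (count_space UNIV) (count_space UNIV) U (\<lambda>\<omega>. g (V \<omega>))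
    = prob_space.mutual_information (measure_pmf p) b (count_space UNIV) (count_space UNIV) U V"
proof -
  have l1: "map_pmf (\<lambda>\<omega>. (U \<omega>, g (V \<omega>))) p = map_pmf (map_prod id g) (map_pmf (\<lambda>\<omega>. (U \<omega>, V \<omega>)) p)"
    by (simp add: map_pmf_comp)
  have l2: "map_pmf (\<lambda>\<omega>. g (V \<omega>)) p = map_pmf g (map_pmf V p)" by (simp add: map_pmf_comp)
  have i: "inj (map_prod id g)" using g by (auto simp: inj_def)
  have e1: "pmf (map_pmf (\<lambda>\<omega>. (U \<omega>, g (V \<omega>))) p) (U \<omega>, g (V \<omega>)) = pmf (map_pmf (\<lambda>\<omega>. (U \<omega>, V \<omega>)) p) (U \<omega>, V \<omega>)" for \<omega>
    unfolding l1 using pmf_map_inj'[OF i, of _ "(U \<omega>, V \<omega>)"] by simp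
  have e2: "pmf (map_pmf (\<lambda>\<omega>. g (V \<omega>)) p) (g (V \<omega>)) = pmf (map_pmf V p) (V \<omega>)" for \<omega>
    unfolding l2 by (rule pmf_map_inj'[OF g])
  show ?thesis unfolding MI_pmf[OF b] e1 e2 ..
qed

lemma fin_len: "finite {xs :: 'f::finite list. length xs = k}"
  using finite_lists_length_eq[of "UNIV :: 'f set" k] by simp

lemma tele: fixes n :: nat shows "(\<Sum>i=1..n. (F i - F (i - 1))::real) = F n - F 0"
  by (induction n) simp_all

lemma measure_state: "0 \<le> d2 \<Longrightarrow> d2 \<le> 1 \<Longrightarrow> measure (state_pmf d1 d2) {s. snd s} = 1 - d2"
proof -
  assume "0 \<le> d2" "d2 \<le> 1"
  have "{s :: bool \<times> bool. snd s} = UNIV \<times> {True}" by auto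
  then show ?thesis unfolding state_pmf_def using \<open>0 \<le> d2\<close> \<open>d2 \<le> 1\<close>
    by (simp add: measure_pair_rect measure_pmf_single)
qed

lemma set_conv_space:
  fixes \<omega> :: "'f::{finite,field} list \<times> 'f list \<times> 'ta \<times> 'tc \<times> (nat \<Rightarrow> bool \<times> bool)"
  assumes "\<omega> \<in> set_pmf (conv_space L N1 N2 d1 d2 PA PC n)"
  shows "length (fst \<omega>) = L * N1"
proof -
  have ne: "{w :: 'f list. length w = L * N1} \<noteq> {}" by (metis (mono_tags) empty_iff length_replicate mem_Collect_eq)
  show ?thesis using assms fin_len[of "L * N1", where 'f='f] ne
    unfolding conv_space_def by (auto simp: set_pmf_of_set)
qed

lemma cmi_eq:
  fixes p :: "'o pmf" and X :: "'o \<Rightarrow> 'x::countable" and Y :: "'o \<Rightarrow> 'y::countable" and Z :: "'o \<Rightarrow> 'z::countable"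
  shows "prob_space.conditional_mutual_information (measure_pmf p) b (count_space UNIV) (count_space UNIV) (count_space UNIV) X Y Z
    = prob_space.mutual_information (measure_pmf p) b (count_space UNIV) (count_space UNIV) X (\<lambda>\<omega>. (Y \<omega>, Z \<omega>))
      - prob_space.mutual_information (measure_pmf p) b (count_space UNIV) (count_space UNIV) X Z"
  unfolding prob_space.conditional_mutual_information_def[OF prob_space_measure_pmf]
  by (simp add: pair_measure_countable)

theorem lemma10:
  fixes f :: "nat \<Rightarrow> 'f::{finite,field} list \<Rightarrow> 'f list \<Rightarrow> 'ta::countable \<Rightarrow> (bool \<times> bool) list \<Rightarrow> 'f list"
    and PA :: "'ta pmf" and PC :: "'tc::countable pmf"
    and L N1 N2 n :: nat and d1 d2 \<epsilon> b :: real
  assumes "0 < d1" "d1 < 1" "0 < d2" "d2 < 1" "0 < \<epsilon>" "1 < b"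
    and "\<And>i w1 w2 t s. length (f i w1 w2 t s) = L"
    and "prob_space.mutual_information (measure_pmf (conv_space L N1 N2 d1 d2 PA PC n)) b
           (count_space UNIV) (count_space UNIV)
           W1 (\<lambda>\<omega>. (Y2_upto f \<omega> n, S_upto \<omega> n, ThC \<omega>)) < \<epsilon>"
  shows "(\<Sum>i = 1..n. prob_space.conditional_mutual_information
            (measure_pmf (conv_space L N1 N2 d1 d2 PA PC n)) b
            (count_space UNIV) (count_space UNIV) (count_space UNIV)
            (\<lambda>\<omega>. Xin f \<omega> i) W1 (\<lambda>\<omega>. (Y2_upto f \<omega> (i - 1), S_upto \<omega> (i - 1))))
         < \<epsilon> / (1 - d2)"
proof -
  note b = \<open>1 < b\<close>
  note lenf = \<open>\<And>i w1 w2 t s. length (f i w1 w2 t s) = L\<close>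
  define p :: "('f list \<times> 'f list \<times> 'ta \<times> 'tc \<times> (nat \<Rightarrow> bool \<times> bool)) pmf" where "p = conv_space L N1 N2 d1 d2 PA PC n"
  define T where "T k = prob_space.mutual_information (measure_pmf p) b (count_space UNIV) (count_space UNIV)
           W1 (\<lambda>\<omega>. (Y2_upto f \<omega> k, S_upto \<omega> k))" for k
  define C where "C i = prob_space.mutual_information (measure_pmf p) b (count_space UNIV) (count_space UNIV)
       (\<lambda>\<omega>. Xin f \<omega> i) (\<lambda>\<omega>. (W1 \<omega>, (Y2_upto f \<omega> (i - 1), S_upto \<omega> (i - 1))))
     - prob_space.mutual_information (measure_pmf p) b (count_space UNIV) (count_space UNIV)
       (\<lambda>\<omega>. Xin f \<omega> i) (\<lambda>\<omega>. (Y2_upto f \<omega> (i - 1), S_upto \<omega> (i - 1)))" for i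
  have stepi: "T i - T (i - 1) = (1 - d2) * C i" if i: "i \<in> {1..n}" for i
  proof -
    have i1: "1 \<le> i" using i by simp
    let ?\<sigma> = "state_pmf d1 d2"
    define A where "A = (\<lambda>\<omega>::('f list \<times> 'f list \<times> 'ta \<times> 'tc \<times> (nat \<Rightarrow> bool \<times> bool)).
       (fst \<omega>, fst (snd \<omega>), fst (snd (snd \<omega>)), map (snd (snd (snd (snd \<omega>)))) [1..<i]))"
    define \<pi> where "\<pi> = (\<lambda>\<omega>. (A \<omega>, snd (snd (snd (snd \<omega>))) i))"
    define \<mu> where "\<mu> = map_pmf A p"
    have q: "map_pmf \<pi> p = pair_pmf \<mu> ?\<sigma>"
      unfolding \<pi>_def A_def \<mu>_def p_def conv_space_def by (rule indep_state[OF i])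
    define Wf where "Wf = (\<lambda>a::'f list \<times> 'f list \<times> 'ta \<times> (bool \<times> bool) list. fst a)"
    define Xf where "Xf = (\<lambda>a::'f list \<times> 'f list \<times> 'ta \<times> (bool \<times> bool) list.
       f i (fst a) (fst (snd a)) (fst (snd (snd a))) (snd (snd (snd a))))"
    define YPf where "YPf = (\<lambda>a::'f list \<times> 'f list \<times> 'ta \<times> (bool \<times> bool) list.
       map (\<lambda>j. if snd (snd (snd (snd a)) ! (j - 1))
          then Some (f j (fst a) (fst (snd a)) (fst (snd (snd a))) (take (j - 1) (snd (snd (snd a))))) else None) [1..<i])"
    define LPf where "LPf = (\<lambda>a::'f list \<times> 'f list \<times> 'ta \<times> (bool \<times> bool) list. snd (snd (snd a)))"
    have Yform: "Y2_upto f \<omega> k = map (\<lambda>j. if snd (snd (snd (snd (snd \<omega>))) j) then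
         Some (f j (fst \<omega>) (fst (snd \<omega>)) (fst (snd (snd \<omega>))) (map (snd (snd (snd (snd \<omega>)))) [1..<j])) else None) [1..<Suc k]" for \<omega> k
      unfolding Y2_upto_def
    proof (rule map_cong[OF refl])
      fix j assume "j \<in> set [1..<Suc k]"
      then have "Suc (j - 1) = j" by auto
      then show "Y2 f \<omega> j = (if snd (snd (snd (snd (snd \<omega>))) j) then
         Some (f j (fst \<omega>) (fst (snd \<omega>)) (fst (snd (snd \<omega>))) (map (snd (snd (snd (snd \<omega>)))) [1..<j])) else None)"
        by (simp add: Y2_def Xin_def S_upto_def del: upt_Suc)
    qed
    have pW: "W1 = (\<lambda>\<omega>. Wf (fst (\<pi> \<omega>)))" by (auto simp: W1_def Wf_def \<pi>_def A_def)
    have pX: "(\<lambda>\<omega>. Xin f \<omega> i) = (\<lambda>\<omega>. Xf (fst (\<pi> \<omega>)))"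
      using i1 by (auto simp: Xin_def Xf_def \<pi>_def A_def S_upto_def)
    have pYL: "(\<lambda>\<omega>. (Y2_upto f \<omega> (i - 1), S_upto \<omega> (i - 1))) = (\<lambda>\<omega>. (YPf (fst (\<pi> \<omega>)), LPf (fst (\<pi> \<omega>))))"
    proof (rule ext)
      fix \<omega> :: "'f list \<times> 'f list \<times> 'ta \<times> 'tc \<times> (nat \<Rightarrow> bool \<times> bool)"
      have "Y2_upto f \<omega> (i - 1) = YPf (fst (\<pi> \<omega>))"
        unfolding Yform YPf_def \<pi>_def A_def using i1
        by (auto intro!: map_cong simp: take_map take_upt)
      then show "(Y2_upto f \<omega> (i - 1), S_upto \<omega> (i - 1)) = (YPf (fst (\<pi> \<omega>)), LPf (fst (\<pi> \<omega>)))"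
        using i1 by (simp add: S_upto_def LPf_def \<pi>_def A_def)
    qed
    have pYL': "(\<lambda>\<omega>. (Y2_upto f \<omega> i, S_upto \<omega> i)) = (\<lambda>\<omega>. (YPf (fst (\<pi> \<omega>)) @ [if snd (snd (\<pi> \<omega>)) then Some (Xf (fst (\<pi> \<omega>))) else None],
         LPf (fst (\<pi> \<omega>)) @ [snd (\<pi> \<omega>)]))"
    proof (rule ext)
      fix \<omega> :: "'f list \<times> 'f list \<times> 'ta \<times> 'tc \<times> (nat \<Rightarrow> bool \<times> bool)"
      have e1: "(Y2_upto f \<omega> (i - 1), S_upto \<omega> (i - 1)) = (YPf (fst (\<pi> \<omega>)), LPf (fst (\<pi> \<omega>)))"
        using pYL by meson
      have "Y2_upto f \<omega> i = Y2_upto f \<omega> (i - 1) @ [Y2 f \<omega> i]"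
        using i1 by (simp add: Y2_upto_def)
      moreover have "S_upto \<omega> i = S_upto \<omega> (i - 1) @ [snd (snd (snd (snd \<omega>))) i]"
        using i1 by (simp add: S_upto_def)
      moreover have "Y2 f \<omega> i = (if snd (snd (\<pi> \<omega>)) then Some (Xf (fst (\<pi> \<omega>))) else None)"
        using fun_cong[OF pX, of \<omega>] by (simp add: Y2_def \<pi>_def)
      ultimately show "(Y2_upto f \<omega> i, S_upto \<omega> i) = (YPf (fst (\<pi> \<omega>)) @ [if snd (snd (\<pi> \<omega>)) then Some (Xf (fst (\<pi> \<omega>))) else None],
         LPf (fst (\<pi> \<omega>)) @ [snd (\<pi> \<omega>)])"
        using e1 by (simp add: \<pi>_def)
    qed
    have pWYL: "(\<lambda>\<omega>. (W1 \<omega>, (Y2_upto f \<omega> (i - 1), S_upto \<omega> (i - 1)))) = (\<lambda>\<omega>. (Wf (fst (\<pi> \<omega>)), (YPf (fst (\<pi> \<omega>)), LPf (fst (\<pi> \<omega>)))))"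
      using pYL pW by (simp add: fun_eq_iff)
    have setmu: "set_pmf \<mu> = A ` set_pmf p" by (simp add: \<mu>_def)
    have fW: "finite (Wf ` set_pmf \<mu>)"
      by (rule finite_subset[OF _ fin_len[of "L * N1"]])
         (auto simp: setmu Wf_def A_def p_def dest: set_conv_space)
    have fX: "finite (Xf ` set_pmf \<mu>)"
      by (rule finite_subset[OF _ fin_len[of L]]) (auto simp: Xf_def lenf)
    have fY: "finite (YPf ` set_pmf \<mu>)"
      by (rule finite_subset[OF _ finite_lists_length_eq[of "insert None (Some ` {xs. length xs = L})" "i - 1"]])
         (auto simp: YPf_def lenf fin_len)
    have fL: "finite (LPf ` set_pmf \<mu>)"
      by (rule finite_subset[OF _ finite_lists_length_eq[of "UNIV :: (bool \<times> bool) set" "i - 1"]])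
         (auto simp: LPf_def setmu A_def)
    have "T i - T (i - 1) = measure ?\<sigma> {s. snd s} * C i"
      unfolding T_def C_def pWYL
      unfolding pW pX pYL pYL'
      unfolding MI_transfer[OF b, where U="\<lambda>w. Wf (fst w)" and V="\<lambda>w. (YPf (fst w) @ [if snd (snd w) then Some (Xf (fst w)) else None], LPf (fst w) @ [snd w])" and \<pi>=\<pi> and p=p]
        MI_transfer[OF b, where U="\<lambda>w. Wf (fst w)" and V="\<lambda>w. (YPf (fst w), LPf (fst w))" and \<pi>=\<pi> and p=p]
        MI_transfer[OF b, where U="\<lambda>w. Xf (fst w)" and V="\<lambda>w. (Wf (fst w), (YPf (fst w), LPf (fst w)))" and \<pi>=\<pi> and p=p]
        MI_transfer[OF b, where U="\<lambda>w. Xf (fst w)" and V="\<lambda>w. (YPf (fst w), LPf (fst w))" and \<pi>=\<pi> and p=p] q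
      by (rule step[OF b fW fY fL fX])
    then show ?thesis using measure_state[of d2 d1] assms(3,4) by simp
  qed
  have T0: "T 0 = 0"
  proof -
    have e: "(\<lambda>\<omega>. (Y2_upto f \<omega> 0, S_upto \<omega> 0)) = (\<lambda>\<omega>. ([], []))"
      by (simp add: Y2_upto_def S_upto_def)
    show ?thesis unfolding T_def e by (rule MI_const[OF b])
  qed
  have Tn: "T n < \<epsilon>"
  proof -
    define g :: "('f list option list \<times> (bool \<times> bool) list) \<times> 'tc \<Rightarrow> _" where "g = (\<lambda>((y,s),t). (y,(s,t)))"
    have ig: "inj g" by (auto simp: inj_def g_def)
    define F where "F = (\<lambda>w1 w2 ta gg. (W1 (w1, w2, ta, undefined :: 'tc, gg),
        (Y2_upto f (w1, w2, ta, undefined :: 'tc, gg) n, S_upto (w1, w2, ta, undefined :: 'tc, gg) n)))"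
    have fe: "(\<lambda>\<omega>. ((W1 \<omega>, (Y2_upto f \<omega> n, S_upto \<omega> n)), ThC \<omega>)) =
       (\<lambda>\<omega>. (F (fst \<omega>) (fst (snd \<omega>)) (fst (snd (snd \<omega>))) (snd (snd (snd (snd \<omega>)))), fst (snd (snd (snd \<omega>)))))"
      by (rule ext) (simp add: F_def W1_def ThC_def Y2_upto_def Y2_def Xin_def S_upto_def)
    have fe2: "(\<lambda>\<omega>. (W1 \<omega>, (Y2_upto f \<omega> n, S_upto \<omega> n))) =
       (\<lambda>\<omega>. F (fst \<omega>) (fst (snd \<omega>)) (fst (snd (snd \<omega>))) (snd (snd (snd (snd \<omega>)))))"
      by (rule ext) (simp add: F_def W1_def ThC_def Y2_upto_def Y2_def Xin_def S_upto_def)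
    have ind: "map_pmf (\<lambda>\<omega>. ((W1 \<omega>, (Y2_upto f \<omega> n, S_upto \<omega> n)), ThC \<omega>)) p
        = pair_pmf (map_pmf (\<lambda>\<omega>. (W1 \<omega>, (Y2_upto f \<omega> n, S_upto \<omega> n))) p) PC"
      unfolding fe fe2 p_def conv_space_def by (rule indep_theta)
    have "prob_space.mutual_information (measure_pmf p) b (count_space UNIV) (count_space UNIV)
           W1 (\<lambda>\<omega>. (Y2_upto f \<omega> n, S_upto \<omega> n, ThC \<omega>))
        = prob_space.mutual_information (measure_pmf p) b (count_space UNIV) (count_space UNIV)
           W1 (\<lambda>\<omega>. g ((Y2_upto f \<omega> n, S_upto \<omega> n), ThC \<omega>))" by (simp add: g_def)
    also have "\<dots> = prob_space.mutual_information (measure_pmf p) b (count_space UNIV) (count_space UNIV)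
           W1 (\<lambda>\<omega>. ((Y2_upto f \<omega> n, S_upto \<omega> n), ThC \<omega>))"
      by (rule MI_inj2[OF b ig])
    also have "\<dots> = T n" unfolding T_def
      by (rule MI_indep_extra[OF b ind])
    finally show ?thesis using assms(8) p_def by simp
  qed
  have "(\<Sum>i = 1..n. C i) = (\<Sum>i = 1..n. (T i - T (i - 1)) / (1 - d2))"
    using stepi assms(4) by (intro sum.cong refl) (simp add: field_simps)
  also have "\<dots> = (T n - T 0) / (1 - d2)" by (simp only: sum_divide_distrib[symmetric] tele)
  also have "\<dots> < \<epsilon> / (1 - d2)" using Tn T0 assms(4) by (simp add: divide_strict_right_mono)
  finally have "(\<Sum>i = 1..n. C i) < \<epsilon> / (1 - d2)" .
  then show ?thesis unfolding C_def p_def[symmetric] by (simp add: cmi_eq)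
qed

end
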